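(* Let $\mathcal{G}$ be the Galilei group of transformations of $\mathbb{R}^4=\mathbb{R}^3\times\mathbb{R}$ of the form $x\mapsto \begin{pmatrix} S & w\\ 0^T & 1\end{pmatrix}x+b$ ($S\in SO(3)$, $w\in\mathbb{R}^3$, $b\in\mathbb{R}^4$), and let $C\mathcal{G}$ be the conformal Galilei group of transformations $x\mapsto \lambda\begin{pmatrix} S & w\\ 0^T & 1\end{pmatrix}x+b$ with additionally $\lambda>0$. Standard Newtonian simultaneity, i.e. the relation $(\mathbf{x},x^4)\sim(\mathbf{y},y^4)\iff x^4=y^4$, is the only nontrivial $\mathcal{G}$-invariant equivalence relation on $\mathbb{R}^4$ such that either (i) its equivalence classes are connected subspaces of $\mathbb{R}^4$, or (ii) it is $C\mathcal{G}$-invariant.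
   Context: An equivalence relation $\sim$ is invariant under a group of transformations if $x\sim y$ implies $g(x)\sim g(y)$ for all $x,y$ and all $g$ in the group. It is trivial if it is the total relation or the identity relation (diagonal). *)

theory Defs
  imports "HOL-Analysis.Analysis"
begin

text \<open>Points of R^4 = R^3 x R, written as pairs (spatial part, time coordinate).\<close>
type_synonym pt = "(real^3) \<times> real"

definition SO3 :: "(real^3^3) set" where
  "SO3 = {S. orthogonal_matrix S \<and> det S = 1}"

text \<open>The map x |-> [[S, w],[0^T, 1]] x + b, with b = (bs, bt).\<close>
definition galilei_map :: "real^3^3 \<Rightarrow> real^3 \<Rightarrow> real^3 \<Rightarrow> real \<Rightarrow> pt \<Rightarrow> pt" where
  "galilei_map S w bs bt = (\<lambda>(p, t). (S *v p + t *\<^sub>R w + bs, t + bt))"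

definition galilei_group :: "(pt \<Rightarrow> pt) set" where
  "galilei_group = {galilei_map S w bs bt | S w bs bt. S \<in> SO3}"

definition conf_galilei_map :: "real \<Rightarrow> real^3^3 \<Rightarrow> real^3 \<Rightarrow> real^3 \<Rightarrow> real \<Rightarrow> pt \<Rightarrow> pt" where
  "conf_galilei_map l S w bs bt =
     (\<lambda>(p, t). (l *\<^sub>R (S *v p + t *\<^sub>R w) + bs, l * t + bt))"

definition conf_galilei_group :: "(pt \<Rightarrow> pt) set" where
  "conf_galilei_group = {conf_galilei_map l S w bs bt | l S w bs bt. l > 0 \<and> S \<in> SO3}"

definition invariant_under :: "('a \<Rightarrow> 'a) set \<Rightarrow> ('a \<Rightarrow> 'a \<Rightarrow> bool) \<Rightarrow> bool" where
  "invariant_under G R \<longleftrightarrow> (\<forall>g\<in>G. \<forall>x y. R x y \<longrightarrow> R (g x) (g y))"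

definition trivial_rel :: "('a \<Rightarrow> 'a \<Rightarrow> bool) \<Rightarrow> bool" where
  "trivial_rel R \<longleftrightarrow> R = (\<lambda>x y. True) \<or> R = (\<lambda>x y. x = y)"

definition newtonian_sim :: "pt \<Rightarrow> pt \<Rightarrow> bool" where
  "newtonian_sim x y \<longleftrightarrow> snd x = snd y"

end

theory Submission
  imports Defs
begin

definition rotz :: "real \<Rightarrow> real \<Rightarrow> real^3^3" where
  "rotz c s = vector [vector [c, -s, 0], vector [s, c, 0], vector [0, 0, 1]]"
definition roty :: "real \<Rightarrow> real \<Rightarrow> real^3^3" where
  "roty c s = vector [vector [c, 0, s], vector [0, 1, 0], vector [-s, 0, c]]"
definition rotx :: "real \<Rightarrow> real \<Rightarrow> real^3^3" where
  "rotx c s = vector [vector [1, 0, 0], vector [0, c, -s], vector [0, s, c]]"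

lemma rotz_SO3: "c^2 + s^2 = 1 \<Longrightarrow> rotz c s \<in> SO3"
  unfolding SO3_def orthogonal_matrix
proof (intro CollectI conjI)
  assume h: "c^2 + s^2 = 1"
  have h': "c * c + s * s = (1::real)" using h by (simp add: power2_eq_square)
  show "transpose (rotz c s) ** rotz c s = mat 1"
    unfolding vec_eq_iff forall_3 matrix_matrix_mult_def transpose_def mat_def
    by (simp add: sum_3 rotz_def h' add.commute)
  show "det (rotz c s) = 1" unfolding det_3 by (simp add: rotz_def h')
qed

lemma roty_SO3: "c^2 + s^2 = 1 \<Longrightarrow> roty c s \<in> SO3"
  unfolding SO3_def orthogonal_matrix
proof (intro CollectI conjI)
  assume h: "c^2 + s^2 = 1"
  have h': "c * c + s * s = (1::real)" using h by (simp add: power2_eq_square)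
  show "transpose (roty c s) ** roty c s = mat 1"
    unfolding vec_eq_iff forall_3 matrix_matrix_mult_def transpose_def mat_def
    by (simp add: sum_3 roty_def h' add.commute)
  show "det (roty c s) = 1" unfolding det_3 by (simp add: roty_def h' add.commute)
qed

lemma rotx_SO3: "c^2 + s^2 = 1 \<Longrightarrow> rotx c s \<in> SO3"
  unfolding SO3_def orthogonal_matrix
proof (intro CollectI conjI)
  assume h: "c^2 + s^2 = 1"
  have h': "c * c + s * s = (1::real)" using h by (simp add: power2_eq_square)
  show "transpose (rotx c s) ** rotx c s = mat 1"
    unfolding vec_eq_iff forall_3 matrix_matrix_mult_def transpose_def mat_def
    by (simp add: sum_3 rotx_def h' add.commute)
  show "det (rotx c s) = 1" unfolding det_3 by (simp add: rotx_def h')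
qed

lemma rotz_mult: "rotz c s *v v = vector [c * v$1 - s * v$2, s * v$1 + c * v$2, v$3]"
  by (simp add: rotz_def vec_eq_iff forall_3 matrix_vector_mult_def sum_3)
lemma roty_mult: "roty c s *v v = vector [c * v$1 + s * v$3, v$2, c * v$3 - s * v$1]"
  by (simp add: roty_def vec_eq_iff forall_3 matrix_vector_mult_def sum_3)
lemma rotx_mult: "rotx c s *v v = vector [v$1, c * v$2 - s * v$3, s * v$2 + c * v$3]"
  by (simp add: rotx_def vec_eq_iff forall_3 matrix_vector_mult_def sum_3)

lemma vadd: "vector [a,b,c] + vector [d,e,f] = (vector [a+d,b+e,c+f] :: real^3)"
  by (simp add: vec_eq_iff forall_3)
lemma vneg: "- vector [a,b,c] = (vector [-a,-b,-c] :: real^3)"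
  by (simp add: vec_eq_iff forall_3)

lemma vzero: "vector [0,0,0] = (0::real^3)"
  by (simp add: vec_eq_iff forall_3)

lemma real_subgroup_all:
  fixes T :: "real set"
  assumes add: "\<And>x y. x \<in> T \<Longrightarrow> y \<in> T \<Longrightarrow> x + y \<in> T"
    and neg: "\<And>x. x \<in> T \<Longrightarrow> -x \<in> T"
    and z: "0 \<in> T"
    and ivl: "\<And>x. 0 \<le> x \<Longrightarrow> x \<le> e \<Longrightarrow> x \<in> T"
    and e: "e > 0"
  shows "s \<in> T"
proof -
  have mul: "real n * x \<in> T" if "x \<in> T" for n x
  proof (induction n)
    case 0 then show ?case using z by simp
  next
    case (Suc n)
    have "x + real n * x \<in> T" by (rule add[OF that Suc])
    then show ?case by (simp add: distrib_right)
  qed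
  obtain n :: nat where n: "\<bar>s\<bar> / e < real n" using reals_Archimedean2 by blast
  have npos: "real n > 0" using n e
    by (meson abs_ge_zero divide_nonneg_pos le_less_trans)
  have "\<bar>s\<bar> < real n * e" using n e by (simp add: field_simps)
  hence "\<bar>s / real n\<bar> \<le> e" using npos by (simp add: abs_divide field_simps)
  hence "\<bar>s / real n\<bar> \<in> T" by (intro ivl) auto
  hence "s / real n \<in> T" by (cases "s \<ge> 0") (auto dest: neg)
  hence "real n * (s / real n) \<in> T" by (rule mul)
  thus ?thesis using npos by simp
qed

lemma SO3_subgroup_all:
  fixes P :: "(real^3) set"
  assumes add: "\<And>x y. x \<in> P \<Longrightarrow> y \<in> P \<Longrightarrow> x + y \<in> P"
    and neg: "\<And>x. x \<in> P \<Longrightarrow> -x \<in> P"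
    and z: "0 \<in> P"
    and rot: "\<And>S x. S \<in> SO3 \<Longrightarrow> x \<in> P \<Longrightarrow> S *v x \<in> P"
    and p: "p \<in> P" "p \<noteq> 0"
  shows "v \<in> P"
proof -
  have diff: "x - y \<in> P" if "x\<in>P" "y\<in>P" for x y
    using add[OF that(1) neg[OF that(2)]] by simp
  obtain a b where ab: "vector [a, b, 0] \<in> P" "a \<noteq> 0 \<or> b \<noteq> 0"
  proof (cases "p$1 \<noteq> 0 \<or> p$2 \<noteq> 0")
    case True
    have "p - rotz (-1) 0 *v p \<in> P" by (rule diff[OF p(1) rot[OF rotz_SO3 p(1)]]) simp
    moreover have "p - rotz (-1) 0 *v p = vector [2 * p$1, 2 * p$2, 0]"
      by (simp add: rotz_mult vec_eq_iff forall_3)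
    ultimately show ?thesis using that True by auto
  next
    case False
    then have p3: "p$3 \<noteq> 0" using p(2) by (auto simp: vec_eq_iff forall_3)
    have "rotx 0 1 *v p \<in> P" by (rule rot[OF rotx_SO3 p(1)]) simp
    moreover have "rotx 0 1 *v p = vector [0, - p$3, 0]" using False
      by (simp add: rotx_mult vec_eq_iff forall_3)
    ultimately show ?thesis using that p3 by auto
  qed
  define r where "r = sqrt (a^2 + b^2)"
  have "a^2 + b^2 > 0" using ab(2) by (auto simp: add_pos_nonneg add_nonneg_pos)
  hence r0: "r > 0" by (simp add: r_def)
  have r2: "r^2 = a^2 + b^2" unfolding r_def by simp
  have cs1: "(a/r)^2 + (-b/r)^2 = 1"
  proof -
    have "(a/r)^2 + (-b/r)^2 = (a^2+b^2)/r^2" by (simp add: power_divide add_divide_distrib)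
    also have "\<dots> = 1" using r0 by (simp add: r2[symmetric])
    finally show ?thesis .
  qed
  have "rotz (a/r) (-b/r) *v vector [a,b,0] = vector [r,0,0]"
    using r0 r2 by (simp add: rotz_mult vec_eq_iff forall_3 field_simps power2_eq_square)
  hence e1: "vector [r,0,0] \<in> P" using rot[OF rotz_SO3[OF cs1] ab(1)] by simp
  have ivl: "vector [x,0,0] \<in> P" if "0 \<le> x" "x \<le> 2*r" for x
  proof -
    define c where "c = x / (2*r)"
    define s where "s = sqrt (1 - c^2)"
    have c01: "0 \<le> c" "c \<le> 1" using that r0 by (auto simp: c_def field_simps)
    have "c^2 \<le> 1" using c01 by (simp add: power_le_one)
    hence cs: "c^2 + s^2 = 1" "c^2 + (-s)^2 = 1" by (auto simp: s_def)
    have "rotz c s *v vector [r,0,0] + rotz c (-s) *v vector [r,0,0] \<in> P"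
      by (intro add rot rotz_SO3 cs e1)
    moreover have "rotz c s *v vector [r,0,0] + rotz c (-s) *v vector [r,0,0] = vector [x,0,0]"
      using r0 by (simp add: rotz_mult vec_eq_iff forall_3 c_def field_simps)
    ultimately show ?thesis by simp
  qed
  have line: "vector [x,0,0] \<in> P" for x
  proof -
    have "x \<in> {x. vector [x,0,0] \<in> P}"
    proof (rule real_subgroup_all[where e="2*r"])
      show "x + y \<in> {x. vector [x,0,0] \<in> P}"
        if "x \<in> {x. vector [x,0,0] \<in> P}" "y \<in> {x. vector [x,0,0] \<in> P}" for x y
        using add[of "vector [x,0,0]" "vector [y,0,0]"] that by (simp add: vadd)
      show "- x \<in> {x. vector [x,0,0] \<in> P}" if "x \<in> {x. vector [x,0,0] \<in> P}" for x
        using neg[of "vector [x,0,0]"] that by (simp add: vneg)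
      show "0 \<in> {x. vector [x,0,0] \<in> P}" using z by (simp add: vzero)
    qed (use ivl r0 in auto)
    thus ?thesis by simp
  qed
  have "vector [v$1,0,0] + rotz 0 1 *v vector [v$2,0,0] + roty 0 (-1) *v vector [v$3,0,0] \<in> P"
    by (intro add rot rotz_SO3 roty_SO3 line) simp_all
  moreover have "vector [v$1,0,0] + rotz 0 1 *v vector [v$2,0,0] + roty 0 (-1) *v vector [v$3,0,0] = v"
    by (simp add: rotz_mult roty_mult vec_eq_iff forall_3)
  ultimately show ?thesis by simp
qed

lemma SO3_I: "mat 1 \<in> SO3" by (simp add: SO3_def orthogonal_matrix_id)

lemma gal_in: "S \<in> SO3 \<Longrightarrow> galilei_map S w bs bt \<in> galilei_group"
  unfolding galilei_group_def by blast

lemma gal_app: "galilei_map S w bs bt (p,t) = (S *v p + t *\<^sub>R w + bs, t + bt)"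
  by (simp add: galilei_map_def)

context
  fixes R :: "pt \<Rightarrow> pt \<Rightarrow> bool"
  assumes eq: "equivp R" and inv: "invariant_under galilei_group R"
begin

lemma tr: "R (p1,t1) (p2,t2) \<Longrightarrow> R (p1+bs, t1+bt) (p2+bs, t2+bt)"
proof -
  assume h: "R (p1,t1) (p2,t2)"
  have "galilei_map (mat 1) 0 bs bt \<in> galilei_group" by (rule gal_in[OF SO3_I])
  with inv h have "R (galilei_map (mat 1) 0 bs bt (p1,t1)) (galilei_map (mat 1) 0 bs bt (p2,t2))"
    unfolding invariant_under_def by blast
  thus ?thesis by (simp add: gal_app add.commute)
qed

lemma lin: "S \<in> SO3 \<Longrightarrow> R (0,0) (p,t) \<Longrightarrow> R (0,0) (S *v p + t *\<^sub>R w, t)"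
proof -
  assume S: "S \<in> SO3" and h: "R (0,0) (p,t)"
  have "galilei_map S w 0 0 \<in> galilei_group" by (rule gal_in[OF S])
  with inv h have "R (galilei_map S w 0 0 (0,0)) (galilei_map S w 0 0 (p,t))"
    unfolding invariant_under_def by blast
  thus ?thesis by (simp add: gal_app)
qed

lemma diffR: "R (p1,t1) (p2,t2) \<longleftrightarrow> R (0,0) (p2-p1, t2-t1)"
  using tr[of p1 t1 p2 t2 "-p1" "-t1"] tr[of 0 0 "p2-p1" "t2-t1" p1 t1] by auto

lemma addD: "R (0,0) (u,s) \<Longrightarrow> R (0,0) (v,r) \<Longrightarrow> R (0,0) (u+v, s+r)"
proof -
  assume a: "R (0,0) (u,s)" and b: "R (0,0) (v,r)"
  from tr[OF b, of u s] have "R (u,s) (v+u, r+s)" by simp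
  with a have "R (0,0) (v+u, r+s)" using equivp_transp[OF eq] by blast
  thus ?thesis by (simp add: add.commute)
qed

lemma negD: "R (0,0) (u,s) \<Longrightarrow> R (0,0) (-u, -s)"
proof -
  assume a: "R (0,0) (u,s)"
  from tr[OF a, of "-u" "-s"] have "R (-u,-s) (0,0)" by simp
  thus ?thesis using equivp_symp[OF eq] by blast
qed

lemma reflD: "R x x" using equivp_reflp[OF eq] by blast

end

theorem proposition3p7:
  "{R :: pt \<Rightarrow> pt \<Rightarrow> bool.
      equivp R \<and> invariant_under galilei_group R \<and> \<not> trivial_rel R \<and>
      ((\<forall>x. connected {y. R x y}) \<or> invariant_under conf_galilei_group R)}
   = {newtonian_sim}"
proof (rule set_eqI, rule iffI)
  fix R :: "pt \<Rightarrow> pt \<Rightarrow> bool"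
  assume "R \<in> {R :: pt \<Rightarrow> pt \<Rightarrow> bool.
      equivp R \<and> invariant_under galilei_group R \<and> \<not> trivial_rel R \<and>
      ((\<forall>x. connected {y. R x y}) \<or> invariant_under conf_galilei_group R)}"
  hence eq: "equivp R" and inv: "invariant_under galilei_group R" and nt: "\<not> trivial_rel R"
    and cond: "(\<forall>x. connected {y. R x y}) \<or> invariant_under conf_galilei_group R" by auto
  show "R \<in> {newtonian_sim}"
  proof (cases "\<exists>p t. t \<noteq> 0 \<and> R (0,0) (p,t)")
    case True
    then obtain p0 t0 where t0: "t0 \<noteq> 0" "R (0,0) (p0,t0)" by blast
    have allq: "R (0,0) (q,t0)" for q
      using lin[OF eq inv SO3_I t0(2), of "(1/t0) *\<^sub>R (q - p0)"] t0(1) by simp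
    have spatial: "R (0,0) (q,0)" for q
      using addD[OF eq inv allq[of q] negD[OF eq inv allq[of 0]]] by simp
    have Rchar: "R x y \<longleftrightarrow> R (0,0) (0, snd y - snd x)" for x y
    proof -
      obtain p1 t1 p2 t2 where xy: "x = (p1,t1)" "y = (p2,t2)" by (cases x, cases y) auto
      have "R (0,0) (p2-p1, t2-t1) \<longleftrightarrow> R (0,0) (0, t2 - t1)"
        using addD[OF eq inv spatial[of "p2-p1"], of 0 "t2-t1"]
          addD[OF eq inv spatial[of "-(p2-p1)"], of "p2-p1" "t2-t1"] by auto
      thus ?thesis using diffR[OF eq inv] xy by simp
    qed
    have allT: "R (0,0) (0,s)" for s
    proof -
      have tT: "R (0,0) (0,t0)" by (rule allq)
      from cond show ?thesis
      proof
        assume conn: "\<forall>x. connected {y. R x y}"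
        have cimg: "connected (snd ` {y. R (0,0) y})"
          by (rule connected_continuous_image[OF continuous_on_snd[OF continuous_on_id] conn[rule_format]])
        have inimg: "R (0,0) (0,x)" if "x \<in> snd ` {y. R (0,0) y}" for x
        proof -
          from that obtain q where "R (0,0) (q,x)" by force
          thus ?thesis using Rchar[of "(0,0)" "(q,x)"] by simp
        qed
        have z_in: "0 \<in> snd ` {y. R (0,0) y}" using reflD[OF eq inv, of "(0,0)"] by force
        have t_in: "t0 \<in> snd ` {y. R (0,0) y}" using tT by force
        have ivl: "R (0,0) (0,x)" if "0 \<le> x" "x \<le> \<bar>t0\<bar>" for x
        proof (cases "t0 > 0")
          case True
          have "x \<in> {0..t0}" using that True by auto
          thus ?thesis using connected_contains_Icc[OF cimg z_in t_in] inimg by blast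
        next
          case False
          have "-x \<in> {t0..0}" using that False by auto
          hence "R (0,0) (0,-x)" using connected_contains_Icc[OF cimg t_in z_in] inimg by blast
          from negD[OF eq inv this] show ?thesis by simp
        qed
        have "s \<in> {s. R (0,0) (0,s)}"
        proof (rule real_subgroup_all[where e="\<bar>t0\<bar>"])
          show "x + y \<in> {s. R (0,0) (0,s)}" if "x \<in> {s. R (0,0) (0,s)}" "y \<in> {s. R (0,0) (0,s)}" for x y
            using addD[OF eq inv, of 0 x 0 y] that by simp
          show "- x \<in> {s. R (0,0) (0,s)}" if "x \<in> {s. R (0,0) (0,s)}" for x
            using negD[OF eq inv, of 0 x] that by simp
          show "0 \<in> {s. R (0,0) (0,s)}" using reflD[OF eq inv] by simp
        qed (use ivl t0(1) in auto)
        thus ?thesis by simp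
      next
        assume cg: "invariant_under conf_galilei_group R"
        have sc: "R (0,0) (0, l * t0)" if "l > 0" for l
        proof -
          have "conf_galilei_map l (mat 1) 0 0 0 \<in> conf_galilei_group"
            unfolding conf_galilei_group_def using that SO3_I by blast
          with cg tT have "R (conf_galilei_map l (mat 1) 0 0 0 (0,0)) (conf_galilei_map l (mat 1) 0 0 0 (0,t0))"
            unfolding invariant_under_def by blast
          thus ?thesis by (simp add: conf_galilei_map_def)
        qed
        consider "s / t0 > 0" | "s / t0 = 0" | "s / t0 < 0" by linarith
        thus ?thesis
        proof cases
          case 1 then show ?thesis using sc[OF 1] t0(1) by simp
        next
          case 2 then have "s = 0" using t0(1) by simp
          then show ?thesis using reflD[OF eq inv] by simp
        next
          case 3
          have "- (s / t0) > 0" using 3 by simp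
          from negD[OF eq inv sc[OF this]] show ?thesis using t0(1) by simp
        qed
      qed
    qed
    have "R = (\<lambda>x y. True)" using Rchar allT by (auto intro!: ext)
    with nt have False unfolding trivial_rel_def by blast
    thus ?thesis ..
  next
    case False
    hence tz: "t = 0" if "R (0,0) (p,t)" for p t using that by blast
    show ?thesis
    proof (cases "\<exists>p. p \<noteq> 0 \<and> R (0,0) (p,0)")
      case True
      then obtain p where p: "p \<noteq> 0" "R (0,0) (p,0)" by blast
      have allP: "R (0,0) (v,0)" for v
      proof -
        have "v \<in> {v. R (0,0) (v,0)}"
        proof (rule SO3_subgroup_all[where p=p])
          show "x + y \<in> {v. R (0,0) (v,0)}" if "x \<in> {v. R (0,0) (v,0)}" "y \<in> {v. R (0,0) (v,0)}" for x y
            using addD[OF eq inv, of x 0 y 0] that by simp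
          show "- x \<in> {v. R (0,0) (v,0)}" if "x \<in> {v. R (0,0) (v,0)}" for x
            using negD[OF eq inv, of x 0] that by simp
          show "0 \<in> {v. R (0,0) (v,0)}" using reflD[OF eq inv] by simp
          show "S *v x \<in> {v. R (0,0) (v,0)}" if "S \<in> SO3" "x \<in> {v. R (0,0) (v,0)}" for S x
            using lin[OF eq inv that(1), of x 0 0] that(2) by simp
        qed (use p in auto)
        thus ?thesis by simp
      qed
      have "R = newtonian_sim"
      proof (intro ext)
        fix x y :: pt
        obtain p1 t1 p2 t2 where xy: "x = (p1,t1)" "y = (p2,t2)" by (cases x, cases y) auto
        have "R (0,0) (p2-p1, t2-t1) \<longleftrightarrow> t1 = t2"
          using tz[of "p2-p1" "t2-t1"] allP[of "p2-p1"] by auto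
        thus "R x y = newtonian_sim x y" using diffR[OF eq inv] xy by (simp add: newtonian_sim_def)
      qed
      thus ?thesis by simp
    next
      case False
      have "R = (\<lambda>x y. x = y)"
      proof (intro ext iffI)
        fix x y :: pt
        obtain p1 t1 p2 t2 where xy: "x = (p1,t1)" "y = (p2,t2)" by (cases x, cases y) auto
        show "x = y" if "R x y"
        proof -
          have h: "R (0,0) (p2-p1, t2-t1)" using that diffR[OF eq inv] xy by simp
          hence "t2 - t1 = 0" by (rule tz)
          with h False have "p2 - p1 = 0" by (metis diff_self)
          with \<open>t2 - t1 = 0\<close> show ?thesis using xy by simp
        qed
        show "R x y" if "x = y" using that reflD[OF eq inv] by simp
      qed
      with nt have False unfolding trivial_rel_def by blast
      thus ?thesis ..
    qed
  qed
next
  fix R :: "pt \<Rightarrow> pt \<Rightarrow> bool"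
  assume "R \<in> {newtonian_sim}"
  hence R: "R = newtonian_sim" by simp
  have "equivp newtonian_sim"
    by (rule equivpI) (auto simp: reflp_def symp_def transp_def newtonian_sim_def)
  moreover have "invariant_under galilei_group newtonian_sim"
    by (auto simp: invariant_under_def galilei_group_def newtonian_sim_def galilei_map_def case_prod_beta)
  moreover have "invariant_under conf_galilei_group newtonian_sim"
    by (auto simp: invariant_under_def conf_galilei_group_def newtonian_sim_def conf_galilei_map_def case_prod_beta)
  moreover have "\<not> trivial_rel newtonian_sim"
  proof
    assume "trivial_rel newtonian_sim"
    then consider "newtonian_sim = (\<lambda>x y. True)" | "newtonian_sim = (\<lambda>x y. x = y)"
      unfolding trivial_rel_def by blast
    thus False
    proof cases
      case 1
      hence "newtonian_sim (0,0) (0,1)" by metis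
      thus False by (simp add: newtonian_sim_def)
    next
      case 2
      have "newtonian_sim (0,0) (vec 1,0)" by (simp add: newtonian_sim_def)
      hence "((0::real^3),(0::real)) = (vec 1, 0)" using 2 by metis
      thus False by (simp add: vec_eq_iff)
    qed
  qed
  ultimately show "R \<in> {R :: pt \<Rightarrow> pt \<Rightarrow> bool.
      equivp R \<and> invariant_under galilei_group R \<and> \<not> trivial_rel R \<and>
      ((\<forall>x. connected {y. R x y}) \<or> invariant_under conf_galilei_group R)}"
    using R by simp
qed


end
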